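(* Suppose that $R$ is a regular local ring dominated by $S$ and $(u,v)$ are regular parameters of $R$ such that $u=x^t$ and $v=y$, where $t$ is a positive integer. If $t\mid d_k$ for some $k>0$, then $\{u,\{T_i\}_{i=1}^{k+1}\}=\{T'_i\}_{i=0}^{k+1}$ is the beginning of a sequence of jumping polynomials in $R$ (with respect to $(u,v)$). Moreover, for all $1\le i\le k$ the pair of coprime integers defined in the construction of the jumping polynomials $\{T'_i\}_{i\ge0}$ in $R$ is $(p'_i,q'_i)=\left(\frac{p_i}{t},q_i\right)$.
   Context: Setting: $k$ (the base field) is algebraically closed of characteristic $0$; $K^*/K$ is a finite extension of function fields of transcendence degree $2$ over $k$; $\nu^*$ is a $k$-valuation of $K^*$ with valuation ring $V^*$, value group a subgroup of $\mathbb{Q}$ and residue field $V^*/m_{V^*}=k$; $\nu$ is its restriction to $K$. $S$ is an algebraic two-dimensional regular local ring with quotient field $K^*$ dominated by $V^*$, with regular parameters $(x,y)$; $\nu^*$ is normalized so that $\nu^*(x)=1$; $R$ is an algebraic regular local ring with quotient field $K$. Jumping polynomials of a ring $A$ with regular parameters $(a_0,a_1)$, with respect to the valuation $\mu=\nu^*/\nu^*(a_0)$ (so $\mu(a_0)=1$): $T_0=a_0$, $T_1=a_1$, $q_0=\infty$, $p_1,q_1$ coprime positive integers with $\mu(a_1)=p_1/q_1$; for $i\ge1$, $n_{i,j}$ ($0\le j<i$) are nonnegative integers with $n_{i,j}<q_j$ and $q_i\mu(T_i)=\sum_{j<i}n_{i,j}\mu(T_j)$, $\lambda_i\in k$ is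 the residue of $T_i^{q_i}/\prod_{j<i}T_j^{n_{i,j}}$, $T_{i+1}=T_i^{q_i}-\lambda_i\prod_{j<i}T_j^{n_{i,j}}$, and $p_{i+1},q_{i+1}$ are coprime positive integers with $\mu(T_{i+1})=q_i\mu(T_i)+\frac{1}{q_1\cdots q_i}\frac{p_{i+1}}{q_{i+1}}$. Here $\{T_i\}$, $p_i$, $q_i$ denote the jumping polynomials and integers of $S$ with respect to $(x,y)$, $\{T'_i\}$, $p'_i,q'_i$ those of $R$ with respect to $(u,v)$, and $d_k=\gcd(p_1,\dots,p_k)$. *)

theory Defs
  imports "HOL-Computational_Algebra.Polynomial"
begin

text \<open>The ambient field is the function field K*, modelled as a type of class field_char_0.
  The base field k is a subset kk of it.  A valuation is represented by its values on
  nonzero elements, nu :: 'a => rat (value group a subgroup of Q).\<close>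

definition is_subfield :: "'a::field set \<Rightarrow> bool" where
  "is_subfield kk \<longleftrightarrow> 0 \<in> kk \<and> 1 \<in> kk \<and>
     (\<forall>a\<in>kk. \<forall>b\<in>kk. a + b \<in> kk \<and> a * b \<in> kk) \<and>
     (\<forall>a\<in>kk. - a \<in> kk \<and> inverse a \<in> kk)"

definition alg_closed_subfield :: "'a::field set \<Rightarrow> bool" where
  "alg_closed_subfield kk \<longleftrightarrow> is_subfield kk \<and>
     (\<forall>f :: 'a poly. (\<forall>i. coeff f i \<in> kk) \<and> degree f > 0 \<longrightarrow> (\<exists>c\<in>kk. poly f c = 0))"

definition residue_is :: "('a::field \<Rightarrow> rat) \<Rightarrow> 'a \<Rightarrow> 'a \<Rightarrow> bool" where
  "residue_is \<nu> f c \<longleftrightarrow> f - c = 0 \<or> \<nu> (f - c) > 0"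

definition k_valuation_residue_k :: "('a::field \<Rightarrow> rat) \<Rightarrow> 'a set \<Rightarrow> bool" where
  "k_valuation_residue_k \<nu> kk \<longleftrightarrow>
     (\<forall>a b. a \<noteq> 0 \<and> b \<noteq> 0 \<longrightarrow> \<nu> (a * b) = \<nu> a + \<nu> b) \<and>
     (\<forall>a b. a \<noteq> 0 \<and> b \<noteq> 0 \<and> a + b \<noteq> 0 \<longrightarrow> \<nu> (a + b) \<ge> min (\<nu> a) (\<nu> b)) \<and>
     (\<forall>c\<in>kk. c \<noteq> 0 \<longrightarrow> \<nu> c = 0) \<and>
     (\<forall>f. f \<noteq> 0 \<and> \<nu> f \<ge> 0 \<longrightarrow> (\<exists>c\<in>kk. residue_is \<nu> f c))"

text \<open>The first N+1 jumping polynomials T 0, ..., T N of a ring with regular parameters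
  (a0, a1) w.r.t. mu = nu / nu(a0), together with the integers p i, q i (1 <= i <= N),
  n i j (1 <= i < N, j < i) and the residues lam i (1 <= i < N).  q 0 = infinity is
  encoded by imposing no bound on n i 0.\<close>
definition jumping_prefix ::
  "('a::field \<Rightarrow> rat) \<Rightarrow> 'a set \<Rightarrow> 'a \<Rightarrow> 'a \<Rightarrow> (nat \<Rightarrow> 'a) \<Rightarrow> (nat \<Rightarrow> nat) \<Rightarrow> (nat \<Rightarrow> nat)
    \<Rightarrow> (nat \<Rightarrow> nat \<Rightarrow> nat) \<Rightarrow> (nat \<Rightarrow> 'a) \<Rightarrow> nat \<Rightarrow> bool" where
  "jumping_prefix \<nu> kk a0 a1 T p q n lam N \<longleftrightarrow>
    (let \<mu> = (\<lambda>f. \<nu> f / \<nu> a0) in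
      1 \<le> N \<and> T 0 = a0 \<and> T 1 = a1 \<and>
      (\<forall>i\<in>{0..N}. T i \<noteq> 0) \<and>
      (\<forall>i\<in>{1..N}. p i > 0 \<and> q i > 0 \<and> coprime (p i) (q i)) \<and>
      \<mu> a1 = of_nat (p 1) / of_nat (q 1) \<and>
      (\<forall>i\<in>{1..<N}.
         (\<forall>j\<in>{1..<i}. n i j < q j) \<and>
         of_nat (q i) * \<mu> (T i) = (\<Sum>j<i. of_nat (n i j) * \<mu> (T j)) \<and>
         lam i \<in> kk \<and>
         residue_is \<nu> (T i ^ q i / (\<Prod>j<i. T j ^ n i j)) (lam i) \<and>
         T (Suc i) = T i ^ q i - lam i * (\<Prod>j<i. T j ^ n i j) \<and>
         \<mu> (T (Suc i)) = of_nat (q i) * \<mu> (T i)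
             + (1 / of_nat (\<Prod>j\<in>{1..i}. q j)) * (of_nat (p (Suc i)) / of_nat (q (Suc i)))))"

definition dk :: "(nat \<Rightarrow> nat) \<Rightarrow> nat \<Rightarrow> nat" where
  "dk p k = Gcd (p ` {1..k})"

end

theory Submission
  imports Defs
begin

definition tint :: "nat \<Rightarrow> rat \<Rightarrow> bool" where
  "tint t r \<longleftrightarrow> (\<exists>a::int. \<exists>b::nat. b > 0 \<and> coprime b t \<and> r * of_nat b = of_nat t * of_int a)"

lemma tint_add: assumes "tint t r" "tint t s" shows "tint t (r + s)"
proof -
  obtain a b where ab: "b > 0" "coprime b t" "r * of_nat b = of_nat t * of_int a" using assms(1) tint_def by blast
  obtain c d where cd: "d > 0" "coprime d t" "s * of_nat d = of_nat t * of_int c" using assms(2) tint_def by blast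
  have "(r + s) * of_nat (b*d) = (r * of_nat b) * of_nat d + (s * of_nat d) * of_nat b"
    by (simp add: algebra_simps)
  also have "\<dots> = of_nat t * of_int (a * int d + c * int b)" using ab cd by (simp add: algebra_simps)
  finally show ?thesis unfolding tint_def using ab cd
    by (metis coprime_mult_left_iff nat_0_less_mult_iff)
qed

lemma tint_neg: assumes "tint t r" shows "tint t (- r)"
proof -
  obtain a b where ab: "b > 0" "coprime b t" "r * of_nat b = of_nat t * of_int a" using assms(1) tint_def by blast
  have "(- r) * of_nat b = of_nat t * of_int (- a)" using ab(3) by simp
  thus ?thesis unfolding tint_def using ab by blast
qed

lemma tint_mult: assumes "tint t r" shows "tint t (of_nat m * r)"
proof -
  obtain a b where ab: "b > 0" "coprime b t" "r * of_nat b = of_nat t * of_int a" using assms(1) tint_def by blast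
  have "(of_nat m * r) * of_nat b = of_nat t * of_int (int m * a)" using ab(3)
    by (metis mult.assoc mult.left_commute of_int_mult of_int_of_nat_eq)
  thus ?thesis unfolding tint_def using ab by blast
qed

lemma tint_zero: "tint t 0"
  unfolding tint_def by (rule exI[of _ 0], rule exI[of _ 1]) simp

lemma tint_sum: "(\<And>j. j \<in> A \<Longrightarrow> tint t (f j)) \<Longrightarrow> tint t (\<Sum>j\<in>A. f j)"
proof (induction A rule: infinite_finite_induct)
  case (infinite A) then show ?case by (simp add: tint_zero)
next
  case empty then show ?case by (simp add: tint_zero)
next
  case (insert x F) then show ?case by (simp add: tint_add)
qed

lemma tint_frac: assumes "t dvd p" "coprime b t" "b > 0" shows "tint t (of_nat p / of_nat b)"
proof -
  obtain c where c: "p = t * c" using assms(1) by blast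
  have "(of_nat p / of_nat b) * of_nat b = (of_nat t * of_int (int c) :: rat)" using assms(3) c by simp
  thus ?thesis unfolding tint_def using assms by blast
qed

lemma tint_nat: assumes "tint t (of_nat m)" shows "t dvd m"
proof -
  obtain a b where ab: "b > 0" "coprime b t" "of_nat m * of_nat b = (of_nat t * of_int a :: rat)" using assms tint_def by blast
  have "int m * int b = int t * a" using ab(3)
    by (metis (mono_tags, opaque_lifting) of_int_eq_iff of_int_mult of_int_of_nat_eq)
  hence "int t dvd int m * int b" by simp
  moreover have "coprime (int t) (int b)" using ab(2) by (simp add: coprime_commute)
  ultimately have "int t dvd int m" using coprime_dvd_mult_left_iff by blast
  thus ?thesis by simp
qed

lemma nu_pow: assumes "k_valuation_residue_k \<nu> kk" "(x::'a::field) \<noteq> 0" shows "\<nu> (x ^ m) = of_nat m * \<nu> x"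
proof (induction m)
  case 0
  have m: "\<forall>a b. a \<noteq> 0 \<and> b \<noteq> 0 \<longrightarrow> \<nu> (a * b) = \<nu> a + \<nu> b"
    using assms(1) unfolding k_valuation_residue_k_def by blast
  have "\<nu> 1 = \<nu> 1 + \<nu> 1" using m[rule_format, of 1 1] by simp
  then show ?case by simp
next
  case (Suc m)
  have "\<nu> (x * x ^ m) = \<nu> x + \<nu> (x ^ m)" using assms unfolding k_valuation_residue_k_def by simp
  then show ?case using Suc by (simp add: algebra_simps)
qed


lemma frac_gcd: assumes "(b::nat) > 0" shows "(of_nat (a div gcd a b) / of_nat (b div gcd a b) :: rat) = of_nat a / of_nat b"
proof -
  have g: "gcd a b > 0" using assms by simp
  obtain a' where a': "a = gcd a b * a'" by (meson gcd_dvd1 dvdE)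
  obtain b' where b': "b = gcd a b * b'" by (meson gcd_dvd2 dvdE)
  have "a div gcd a b = a'" using g a' by (metis nonzero_mult_div_cancel_left not_gr_zero)
  moreover have "b div gcd a b = b'" using g b' by (metis nonzero_mult_div_cancel_left not_gr_zero)
  moreover have e1: "(of_nat a / of_nat b :: rat) = of_nat (gcd a b * a') / of_nat (gcd a b * b')"
    using arg_cong2[OF a' b', of "\<lambda>x y. (of_nat x / of_nat y :: rat)"] .
  moreover have e2: "(of_nat (gcd a b * a') / of_nat (gcd a b * b') :: rat) = of_nat a' / of_nat b'"
    using g by (metis mult_divide_mult_cancel_left of_nat_0_less_iff less_irrefl of_nat_mult)
  ultimately show ?thesis by simp
qed

theorem theorem7p1:
  fixes \<nu> :: "'a::field_char_0 \<Rightarrow> rat" and kk :: "'a set"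
    and x y u v :: 'a and t k :: nat
    and T lam :: "nat \<Rightarrow> 'a" and p q :: "nat \<Rightarrow> nat" and n :: "nat \<Rightarrow> nat \<Rightarrow> nat"
  assumes kk: "alg_closed_subfield kk"
    and val: "k_valuation_residue_k \<nu> kk"
    and xy: "x \<noteq> 0" "y \<noteq> 0" "\<nu> x = 1" "\<nu> y > 0"
    and S_jump: "\<forall>N\<ge>1. jumping_prefix \<nu> kk x y T p q n lam N"
    and tpos: "t > 0"
    and uv: "u = x ^ t" "v = y"
    and kpos: "k > 0"
    and tdiv: "t dvd dk p k"
  shows "\<exists>p' q' n' lam'.
           jumping_prefix \<nu> kk u v (\<lambda>i. if i = 0 then u else T i) p' q' n' lam' (Suc k) \<and>
           (\<forall>i\<in>{1..k}. p' i * t = p i \<and> q' i = q i)"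
proof -
  have J: "jumping_prefix \<nu> kk x y T p q n lam (Suc k)" using S_jump by simp
  hence J': "T 0 = x \<and> T 1 = y \<and>
      (\<forall>i\<in>{0..Suc k}. T i \<noteq> 0) \<and>
      (\<forall>i\<in>{1..Suc k}. p i > 0 \<and> q i > 0 \<and> coprime (p i) (q i)) \<and>
      \<nu> y = of_nat (p 1) / of_nat (q 1) \<and>
      (\<forall>i\<in>{1..<Suc k}.
         (\<forall>j\<in>{1..<i}. n i j < q j) \<and>
         of_nat (q i) * \<nu> (T i) = (\<Sum>j<i. of_nat (n i j) * \<nu> (T j)) \<and>
         lam i \<in> kk \<and>
         residue_is \<nu> (T i ^ q i / (\<Prod>j<i. T j ^ n i j)) (lam i) \<and>
         T (Suc i) = T i ^ q i - lam i * (\<Prod>j<i. T j ^ n i j) \<and>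
         \<nu> (T (Suc i)) = of_nat (q i) * \<nu> (T i)
             + (1 / of_nat (\<Prod>j\<in>{1..i}. q j)) * (of_nat (p (Suc i)) / of_nat (q (Suc i))))"
    unfolding jumping_prefix_def Let_def xy(3) div_by_1 by blast
  have T0: "T 0 = x" and T1: "T 1 = y" and Tnz: "\<And>i. i \<le> Suc k \<Longrightarrow> T i \<noteq> 0"
    and pq: "\<And>i. 1 \<le> i \<Longrightarrow> i \<le> Suc k \<Longrightarrow> p i > 0 \<and> q i > 0 \<and> coprime (p i) (q i)"
    and nuy: "\<nu> y = of_nat (p 1) / of_nat (q 1)"
    using J' by auto
  have stepall: "\<forall>i\<in>{1..<Suc k}. (\<forall>j\<in>{1..<i}. n i j < q j) \<and>
         of_nat (q i) * \<nu> (T i) = (\<Sum>j<i. of_nat (n i j) * \<nu> (T j)) \<and>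
         lam i \<in> kk \<and>
         residue_is \<nu> (T i ^ q i / (\<Prod>j<i. T j ^ n i j)) (lam i) \<and>
         T (Suc i) = T i ^ q i - lam i * (\<Prod>j<i. T j ^ n i j) \<and>
         \<nu> (T (Suc i)) = of_nat (q i) * \<nu> (T i)
             + (1 / of_nat (\<Prod>j\<in>{1..i}. q j)) * (of_nat (p (Suc i)) / of_nat (q (Suc i)))"
    using J' by blast
  have step: "\<And>i. 1 \<le> i \<Longrightarrow> i \<le> k \<Longrightarrow> (\<forall>j\<in>{1..<i}. n i j < q j) \<and>
         of_nat (q i) * \<nu> (T i) = (\<Sum>j<i. of_nat (n i j) * \<nu> (T j)) \<and>
         lam i \<in> kk \<and>
         residue_is \<nu> (T i ^ q i / (\<Prod>j<i. T j ^ n i j)) (lam i) \<and>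
         T (Suc i) = T i ^ q i - lam i * (\<Prod>j<i. T j ^ n i j) \<and>
         \<nu> (T (Suc i)) = of_nat (q i) * \<nu> (T i)
             + (1 / of_nat (\<Prod>j\<in>{1..i}. q j)) * (of_nat (p (Suc i)) / of_nat (q (Suc i)))"
    by (rule bspec[OF stepall]) simp

  have st_n: "\<And>i. 1 \<le> i \<Longrightarrow> i \<le> k \<Longrightarrow> (\<forall>j\<in>{1..<i}. n i j < q j)"
    and st_sum: "\<And>i. 1 \<le> i \<Longrightarrow> i \<le> k \<Longrightarrow> of_nat (q i) * \<nu> (T i) = (\<Sum>j<i. of_nat (n i j) * \<nu> (T j))"
    and st_lam: "\<And>i. 1 \<le> i \<Longrightarrow> i \<le> k \<Longrightarrow> lam i \<in> kk"
    and st_res: "\<And>i. 1 \<le> i \<Longrightarrow> i \<le> k \<Longrightarrow> residue_is \<nu> (T i ^ q i / (\<Prod>j<i. T j ^ n i j)) (lam i)"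
    and st_T: "\<And>i. 1 \<le> i \<Longrightarrow> i \<le> k \<Longrightarrow> T (Suc i) = T i ^ q i - lam i * (\<Prod>j<i. T j ^ n i j)"
    and st_nu: "\<And>i. 1 \<le> i \<Longrightarrow> i \<le> k \<Longrightarrow> \<nu> (T (Suc i)) = of_nat (q i) * \<nu> (T i)
             + (1 / of_nat (\<Prod>j\<in>{1..i}. q j)) * (of_nat (p (Suc i)) / of_nat (q (Suc i)))"
    using step by blast+
  have tp: "\<And>i. 1 \<le> i \<Longrightarrow> i \<le> k \<Longrightarrow> t dvd p i"
  proof -
    fix i assume "1 \<le> i" "i \<le> k"
    hence "Gcd (p ` {1..k}) dvd p i" by (intro Gcd_dvd) auto
    thus "t dvd p i" using tdiv unfolding dk_def using dvd_trans by blast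
  qed
  have cq: "\<And>i. 1 \<le> i \<Longrightarrow> i \<le> k \<Longrightarrow> coprime (q i) t"
  proof -
    fix i assume i: "1 \<le> i" "i \<le> k"
    obtain c where c: "p i = t * c" using tp[OF i] by blast
    have "coprime (p i) (q i)" using pq[of i] i by auto
    thus "coprime (q i) t" using c by (simp add: coprime_commute)
  qed
  define Q where "Q i = (\<Prod>j\<in>{1..i}. q j)" for i
  have cQ: "coprime (Q i) t" if "i \<le> k" for i
    unfolding Q_def using that cq by (intro prod_coprime_left) auto
  have Qpos: "Q i > 0" if "i \<le> Suc k" for i
    unfolding Q_def using that pq by (intro prod_pos) auto
  have QSuc: "Q (Suc i) = Q i * q (Suc i)" for i
    unfolding Q_def by (simp add: prod.cl_ivl_Suc)
  have TI: "1 \<le> i \<longrightarrow> i \<le> k \<longrightarrow> tint t (\<nu> (T i))" for i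
  proof (induction i)
    case 0 then show ?case by simp
  next
    case (Suc i)
    show ?case
    proof (intro impI)
      assume i: "1 \<le> Suc i" "Suc i \<le> k"
      show "tint t (\<nu> (T (Suc i)))"
      proof (cases "i = 0")
        case True
        then show ?thesis using nuy T1 tp[of 1] cq[of 1] pq[of 1] i by (auto intro: tint_frac)
      next
        case False
        hence i1: "1 \<le> i" "i \<le> k" using i by auto
        have e: "\<nu> (T (Suc i)) = of_nat (q i) * \<nu> (T i) + of_nat (p (Suc i)) / of_nat (Q (Suc i))"
          using st_nu[OF i1] QSuc unfolding Q_def by simp
        have "tint t (of_nat (p (Suc i)) / of_nat (Q (Suc i)))"
          using tp[OF i] cQ[OF i(2)] Qpos[of "Suc i"] i by (intro tint_frac) auto
        moreover have "tint t (of_nat (q i) * \<nu> (T i))" using Suc i1 by (intro tint_mult) auto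
        ultimately show ?thesis using e tint_add by simp
      qed
    qed
  qed
  have ndiv: "t dvd n i 0" if i: "1 \<le> i" "i \<le> k" for i
  proof -
    have "(\<Sum>j<i. of_nat (n i j) * \<nu> (T j)) = of_nat (n i 0) * \<nu> (T 0) + (\<Sum>j\<in>{1..<i}. of_nat (n i j) * \<nu> (T j))"
      using i by (simp add: lessThan_atLeast0 sum.atLeast_Suc_lessThan)
    hence "of_nat (n i 0) = of_nat (q i) * \<nu> (T i) + - (\<Sum>j\<in>{1..<i}. of_nat (n i j) * \<nu> (T j))"
      using st_sum[OF i] T0 xy(3) by simp
    moreover have "tint t (of_nat (q i) * \<nu> (T i) + - (\<Sum>j\<in>{1..<i}. of_nat (n i j) * \<nu> (T j)))"
      using TI i by (intro tint_add tint_neg tint_mult tint_sum) auto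
    ultimately show ?thesis using tint_nat by metis
  qed
  have nuu: "\<nu> u = of_nat t" using nu_pow[OF val xy(1)] uv xy(3) by simp
  define g where "g = gcd (p (Suc k)) (t * q (Suc k))"
  define p' where "p' i = (if i = Suc k then p (Suc k) div g else p i div t)" for i
  define q' where "q' i = (if i = Suc k then t * q (Suc k) div g else q i)" for i
  define n' where "n' i j = (if j = 0 then n i 0 div t else n i j)" for i j
  define T' where "T' = (\<lambda>i. if i = 0 then u else T i)"
  have pdiv: "of_nat (p' i) = (of_nat (p i) / of_nat t :: rat)" if "1 \<le> i" "i \<le> k" for i
    using tp[OF that] that tpos unfolding p'_def by (auto elim!: dvdE)
  have pq'k: "of_nat (p' (Suc k)) / of_nat (q' (Suc k)) = (of_nat (p (Suc k)) / of_nat (q (Suc k)) / of_nat t :: rat)"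
    unfolding p'_def q'_def g_def using frac_gcd[of "t * q (Suc k)" "p (Suc k)"] pq[of "Suc k"] tpos by simp
  have prodeq: "(\<Prod>j<i. T' j ^ n' i j) = (\<Prod>j<i. T j ^ n i j)" if i: "1 \<le> i" "i \<le> k" for i
  proof (rule prod.cong)
    fix j assume "j \<in> {..<i}"
    show "T' j ^ n' i j = T j ^ n i j"
    proof (cases "j = 0")
      case True
      have "(x ^ t) ^ (n i 0 div t) = x ^ (n i 0)" using ndiv[OF i]
        by (metis dvd_mult_div_cancel power_mult)
      then show ?thesis using True T0 uv unfolding T'_def n'_def by simp
    qed (simp add: T'_def n'_def)
  qed simp
  have h2: "T' 0 = u" "T' 1 = v" using T1 uv unfolding T'_def by auto
  have h4: "\<forall>i\<in>{0..Suc k}. T' i \<noteq> 0"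
  proof
    fix i assume "i \<in> {0..Suc k}"
    thus "T' i \<noteq> 0" using Tnz xy(1) uv unfolding T'_def by auto
  qed
  have h5: "\<forall>i\<in>{1..Suc k}. 0 < p' i \<and> 0 < q' i \<and> coprime (p' i) (q' i)"
  proof
    fix i assume i: "i \<in> {1..Suc k}"
    show "0 < p' i \<and> 0 < q' i \<and> coprime (p' i) (q' i)"
    proof (cases "i = Suc k")
      case True
      have "g dvd p (Suc k)" "g > 0" using pq[of "Suc k"] unfolding g_def by auto
      have pk: "p (Suc k) > 0" "q (Suc k) > 0" using pq[of "Suc k"] by auto
      hence a: "p (Suc k) div g > 0" using dvd_div_eq_0_iff[OF \<open>g dvd p (Suc k)\<close>] by simp
      have "g dvd t * q (Suc k)" "g > 0" using pq[of "Suc k"] unfolding g_def by auto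
      hence b: "t * q (Suc k) div g > 0" using pk tpos dvd_div_eq_0_iff[OF \<open>g dvd t * q (Suc k)\<close>] by simp
      have "coprime (p (Suc k) div g) (t * q (Suc k) div g)"
        unfolding g_def using pk by (intro div_gcd_coprime) simp
      then show ?thesis using a b True unfolding p'_def q'_def by simp
    next
      case False
      hence i': "1 \<le> i" "i \<le> k" using i by auto
      obtain c where c: "p i = t * c" using tp[OF i'] by blast
      have "c > 0" using pq[of i] i' c by auto
      moreover have "p i div t = c" using c tpos by simp
      moreover have "coprime c (q i)" using pq[of i] i' c by simp
      ultimately show ?thesis using False pq[of i] i' unfolding p'_def q'_def by simp
    qed
  qed
  have h6: "\<nu> v / \<nu> u = of_nat (p' 1) / of_nat (q' 1)"
      using pdiv[of 1] kpos nuy nuu uv unfolding q'_def by simp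
  have h7: "\<forall>i\<in>{1..<Suc k}. (\<forall>j\<in>{1..<i}. n' i j < q' j) \<and>
         of_nat (q' i) * (\<nu> (T' i) / \<nu> u) = (\<Sum>j<i. of_nat (n' i j) * (\<nu> (T' j) / \<nu> u)) \<and>
         lam i \<in> kk \<and>
         residue_is \<nu> (T' i ^ q' i / (\<Prod>j<i. T' j ^ n' i j)) (lam i) \<and>
         T' (Suc i) = T' i ^ q' i - lam i * (\<Prod>j<i. T' j ^ n' i j) \<and>
         \<nu> (T' (Suc i)) / \<nu> u = of_nat (q' i) * (\<nu> (T' i) / \<nu> u)
             + (1 / of_nat (\<Prod>j\<in>{1..i}. q' j)) * (of_nat (p' (Suc i)) / of_nat (q' (Suc i)))"
    (is "\<forall>i\<in>_. ?P i")
  proof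
    fix i assume i: "i \<in> {1..<Suc k}"
    hence i': "1 \<le> i" "i \<le> k" by auto
    have T'i: "T' i = T i" "T' (Suc i) = T (Suc i)" using i' unfolding T'_def by auto
    have q'i: "q' i = q i" using i' unfolding q'_def by auto
    have Q': "(\<Prod>j\<in>{1..i}. q' j) = Q i" unfolding Q_def q'_def using i' by (intro prod.cong) auto
    have a1: "\<forall>j\<in>{1..<i}. n' i j < q' j" using st_n[OF i'] i' unfolding n'_def q'_def by auto
    have a3: "lam i \<in> kk" using st_lam[OF i'] by simp
    have a4: "residue_is \<nu> (T' i ^ q' i / (\<Prod>j<i. T' j ^ n' i j)) (lam i)"
      using st_res[OF i'] T'i q'i prodeq[OF i'] by simp
    have a5: "T' (Suc i) = T' i ^ q' i - lam i * (\<Prod>j<i. T' j ^ n' i j)"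
      using st_T[OF i'] T'i q'i prodeq[OF i'] by simp
    have sumeq: "(\<Sum>j<i. of_nat (n' i j) * (\<nu> (T' j) / \<nu> u)) = (\<Sum>j<i. of_nat (n i j) * \<nu> (T j)) / of_nat t"
      unfolding sum_divide_distrib
    proof (rule sum.cong)
      fix j assume "j \<in> {..<i}"
      show "of_nat (n' i j) * (\<nu> (T' j) / \<nu> u) = of_nat (n i j) * \<nu> (T j) / of_nat t"
      proof (cases "j = 0")
        case True
        obtain c where c: "n i 0 = t * c" using ndiv[OF i'] by blast
        then show ?thesis using True T0 xy(3) nuu tpos unfolding T'_def n'_def by simp
      qed (simp add: T'_def n'_def nuu)
    qed simp
    have a2: "of_nat (q' i) * (\<nu> (T' i) / \<nu> u) = (\<Sum>j<i. of_nat (n' i j) * (\<nu> (T' j) / \<nu> u))"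
      unfolding sumeq using st_sum[OF i'] T'i q'i nuu by simp
    have pfrac: "of_nat (p' (Suc i)) / of_nat (q' (Suc i)) = (of_nat (p (Suc i)) / of_nat (q (Suc i)) / of_nat t :: rat)"
    proof (cases "i = k")
      case True then show ?thesis using pq'k by simp
    next
      case False
      hence "Suc i \<le> k" using i' by simp
      then show ?thesis using pdiv[of "Suc i"] unfolding q'_def by simp
    qed
    have a6: "\<nu> (T' (Suc i)) / \<nu> u = of_nat (q' i) * (\<nu> (T' i) / \<nu> u) +
          1 / of_nat (\<Prod>j\<in>{1..i}. q' j) * (of_nat (p' (Suc i)) / of_nat (q' (Suc i)))"
      unfolding pfrac Q' using st_nu[OF i'] T'i q'i nuu unfolding Q_def by (simp add: add_divide_distrib mult_ac)
    show "?P i" using a1 a2 a3 a4 a5 a6 by blast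
  qed
  have JP: "jumping_prefix \<nu> kk u v T' p' q' n' lam (Suc k)"
  proof -
    have h1: "1 \<le> Suc k" by simp
    show ?thesis unfolding jumping_prefix_def Let_def using h1 h2 h4 h5 h6 h7 by blast
  qed
  have "\<forall>i\<in>{1..k}. p' i * t = p i \<and> q' i = q i"
    using tp unfolding p'_def q'_def by auto
  thus ?thesis using JP unfolding T'_def by blast
qed

end
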